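(* Let $n\ge 2$, let $S=\{p_1,\dots,p_n\}$ be a set of $n$ point sites in $\mathbb{R}^d$, and let $\{d_{p_i}\}_{1\le i\le n}$ be an admissible system of distance functions. Let $C\subset\mathbb{R}^d$ be a bounded open set, and let $\lambda_1,\dots,\lambda_n>0$ be real numbers with $\lambda_1+\dots+\lambda_n=\mu(C)$. Then there exists a weight vector $w=(w_1,\dots,w_n)\in\mathbb{R}^n$ such that $\mu\bigl(C\cap \mathrm{VR}_w(p_i,S)\bigr)=\lambda_i$ for all $1\le i\le n$. If, moreover, $C$ is path-connected, then such a $w$ is unique up to adding the same constant to all $w_i$, and consequently the parts $C_i=C\cap\mathrm{VR}_w(p_i,S)$ are uniquely determined.
   Context: $\mu$ is a measure defined on all Lebesgue-measurable subsets of $\mathbb{R}^d$ such that $\mu$ and $d$-dimensional Lebesgue measure are mutually absolutely continuous. Each site $p\in S$ has a continuous function $d_p:\mathbb{R}^d\to\mathbb{R}_{\ge 0}$. For $p\neq q\in S$ and $\gamma\in\mathbb{R}$ let $R_\gamma(p,q)=\{z\in\mathbb{R}^d : d_p(z)-d_q(z)<\gamma\}$. The system $\{d_p\}_{p\in S}$ is called admissible if for all $p\neq q\in S$ and every bounded open set $C\subset\mathbb{R}^d$ there exist real numbers $m_{pq}<M_{pq}$ such that the function $\gamma\mapsto\mu(C\cap R_\gamma(p,q))$ is continuous on $\mathbb{R}$ and increases (monotonically) from $0$ to $\mu(C)$ as $\gamma$ grows from $m_{pq}$ to $M_{pq}$; moreover $C\cap R_\gamma(p,q)=\emptyset$ for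 $\gamma\le m_{pq}$ and $C\subset R_\gamma(p,q)$ for $\gamma\ge M_{pq}$. For a weight vector $w=(w_1,\dots,w_n)$, the additively weighted Voronoi region of $p_i$ is $\mathrm{VR}_w(p_i,S)=\bigcap_{j\neq i}R_{w_i-w_j}(p_i,p_j)$, i.e. the set of points $z$ with $d_{p_i}(z)-w_i<d_{p_j}(z)-w_j$ for all $j\ne i$. *)

theory Defs
  imports "HOL-Analysis.Analysis"
begin

definition mutually_ac_lebesgue :: "'a::euclidean_space measure \<Rightarrow> bool" where
  "mutually_ac_lebesgue M \<longleftrightarrow>
     sets M = sets lebesgue \<and> null_sets M = null_sets lebesgue"

definition Rgam :: "('a \<Rightarrow> 'b \<Rightarrow> real) \<Rightarrow> 'a \<Rightarrow> 'a \<Rightarrow> real \<Rightarrow> 'b set" where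
  "Rgam D p q \<gamma> = {z. D p z - D q z < \<gamma>}"

definition admissible ::
  "'a::euclidean_space measure \<Rightarrow> ('b \<Rightarrow> 'a \<Rightarrow> real) \<Rightarrow> 'b set \<Rightarrow> bool" where
  "admissible M D S \<longleftrightarrow>
     (\<forall>p\<in>S. continuous_on UNIV (D p) \<and> (\<forall>z. 0 \<le> D p z)) \<and>
     (\<forall>p\<in>S. \<forall>q\<in>S. p \<noteq> q \<longrightarrow>
        (\<forall>C. bounded C \<and> open C \<longrightarrow>
          (\<exists>m Mx. m < Mx \<and>
             continuous_on UNIV (\<lambda>\<gamma>. emeasure M (C \<inter> Rgam D p q \<gamma>)) \<and>
             mono_on {m..Mx} (\<lambda>\<gamma>. emeasure M (C \<inter> Rgam D p q \<gamma>)) \<and>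
             (\<forall>\<gamma>\<le>m. C \<inter> Rgam D p q \<gamma> = {}) \<and>
             (\<forall>\<gamma>\<ge>Mx. C \<subseteq> Rgam D p q \<gamma>))))"

definition VR :: "('b \<Rightarrow> 'a \<Rightarrow> real) \<Rightarrow> (nat \<Rightarrow> 'b) \<Rightarrow> nat \<Rightarrow> (nat \<Rightarrow> real) \<Rightarrow> nat \<Rightarrow> 'a set" where
  "VR D p n w i = (\<Inter>j\<in>{..<n} - {i}. Rgam D (p i) (p j) (w i - w j))"

end

theory Submission imports Defs begin

locale vs =
  fixes M :: "'a::euclidean_space measure" and D :: "'a \<Rightarrow> 'a \<Rightarrow> real"
    and p :: "nat \<Rightarrow> 'a" and n :: nat and C :: "'a set"
  assumes mac: "mutually_ac_lebesgue M" and n2: "n \<ge> 2" and inj: "inj_on p {..<n}"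
    and adm: "admissible M D (p ` {..<n})" and bC: "bounded C" and oC: "open C"
    and finC: "emeasure M C < \<infinity>"
begin

lemma sets_M: "sets M = sets lebesgue" using mac by (simp add: mutually_ac_lebesgue_def)
lemma null_M: "null_sets M = null_sets lebesgue" using mac by (simp add: mutually_ac_lebesgue_def)
lemma open_meas: "open U \<Longrightarrow> U \<in> sets M" by (simp add: sets_M)
lemma closed_meas: "closed U \<Longrightarrow> U \<in> sets M" by (simp add: sets_M)
lemma C_meas: "C \<in> sets M" using oC open_meas by blast

lemma cont_f: "i < n \<Longrightarrow> continuous_on UNIV (D (p i))"
  using adm by (auto simp: admissible_def)

lemma meas_cont: "continuous_on UNIV (g::'a \<Rightarrow> real) \<Longrightarrow> g \<in> borel_measurable M"
  by (subst measurable_cong_sets[OF sets_M refl], rule measurable_completion,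
      simp add: borel_measurable_continuous_onI)

lemma fin_sub: "A \<subseteq> C \<Longrightarrow> emeasure M A = ennreal (measure M A)"
proof -
  assume "A \<subseteq> C"
  hence "emeasure M A \<le> emeasure M C" by (rule emeasure_mono[OF _ C_meas])
  thus ?thesis using finC by (intro emeasure_eq_ennreal_measure) auto
qed

lemma fmeas_sub: "A \<in> sets M \<Longrightarrow> A \<subseteq> C \<Longrightarrow> A \<in> fmeasurable M"
  using fin_sub by (auto simp: fmeasurable_def)

lemma pos_open: "open U \<Longrightarrow> U \<noteq> {} \<Longrightarrow> 0 < emeasure M U"
proof -
  assume U: "open U" "U \<noteq> {}"
  hence "U \<notin> null_sets M" using open_not_negligible negligible_iff_null_sets null_M by metis
  thus ?thesis using open_meas[OF U(1)] by (metis not_gr_zero null_setsI)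
qed

lemma Rgam_open: "i < n \<Longrightarrow> j < n \<Longrightarrow> open (Rgam D (p i) (p j) g)"
  unfolding Rgam_def by (intro open_Collect_less continuous_intros cont_f) auto

lemma adm_pair: assumes "i<n" "j<n" "i\<noteq>j"
  shows "\<exists>m Mx. m < Mx \<and> continuous_on UNIV (\<lambda>\<gamma>. emeasure M (C \<inter> Rgam D (p i) (p j) \<gamma>)) \<and>
     (\<forall>\<gamma>\<le>m. C \<inter> Rgam D (p i) (p j) \<gamma> = {}) \<and> (\<forall>\<gamma>\<ge>Mx. C \<subseteq> Rgam D (p i) (p j) \<gamma>)"
proof -
  have "p i \<noteq> p j" using inj assms by (auto dest: inj_onD)
  thus ?thesis using adm assms bC oC unfolding admissible_def by (metis imageI lessThan_iff)
qed

lemma tie_null: assumes ij: "i<n" "j<n" "i\<noteq>j"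
  shows "emeasure M (C \<inter> {z. D (p i) z - D (p j) z = g}) = 0"
proof -
  define E where "E = (\<lambda>\<gamma>. emeasure M (C \<inter> Rgam D (p i) (p j) \<gamma>))"
  have cE: "continuous_on UNIV E" using adm_pair[OF ij] unfolding E_def by blast
  define T where "T = C \<inter> {z. D (p i) z - D (p j) z = g}"
  have Tm: "T \<in> sets M" unfolding T_def
    by (intro sets.Int C_meas closed_meas closed_Collect_eq continuous_intros cont_f ij)
  have Rm: "\<And>\<gamma>. C \<inter> Rgam D (p i) (p j) \<gamma> \<in> sets M"
    by (intro sets.Int C_meas open_meas Rgam_open ij)
  have le: "emeasure M T + E g \<le> E (g + e)" if "e > 0" for e
  proof -
    have "emeasure M T + E g = emeasure M (T \<union> (C \<inter> Rgam D (p i) (p j) g))"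
      unfolding E_def by (rule plus_emeasure[OF Tm Rm]) (auto simp: T_def Rgam_def)
    also have "\<dots> \<le> E (g + e)" unfolding E_def
      by (rule emeasure_mono[OF _ Rm]) (use that in \<open>auto simp: T_def Rgam_def\<close>)
    finally show ?thesis .
  qed
  have iE: "isCont E g" using cE by (simp add: continuous_on_eq_continuous_at)
  have "((\<lambda>e::real. e) \<longlongrightarrow> 0) (at_right 0)" by (rule tendsto_ident_at)
  hence "((\<lambda>e::real. g + e) \<longlongrightarrow> g + 0) (at_right 0)" by (intro tendsto_add tendsto_const)
  hence lim: "((\<lambda>e. E (g + e)) \<longlongrightarrow> E g) (at_right 0)"
    using isCont_tendsto_compose[OF iE] by simp
  have "emeasure M T + E g \<le> E g"
  proof (rule tendsto_lowerbound[OF lim])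
    have "eventually (\<lambda>e. e > 0) (at_right (0::real))" by (simp add: eventually_at_right_less)
    thus "\<forall>\<^sub>F e in at_right 0. emeasure M T + E g \<le> E (g + e)" by (rule eventually_mono) (rule le)
  qed simp
  moreover have "E g < \<infinity>" unfolding E_def
    by (rule le_less_trans[OF emeasure_mono[OF _ C_meas] finC]) auto
  ultimately have "emeasure M T + E g \<le> 0 + E g" by simp
  hence "emeasure M T \<le> 0" using \<open>E g < \<infinity>\<close>
    by (metis add.commute ennreal_add_left_cancel_le less_imp_neq)
  thus ?thesis unfolding T_def by simp
qed


lemma n_pos: "0 < n" using n2 by simp

definition hmin :: "(nat \<Rightarrow> real) \<Rightarrow> 'a \<Rightarrow> real" where
  "hmin w z = Min ((\<lambda>i. D (p i) z - w i) ` {..<n})"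

lemma hmin_le: "i < n \<Longrightarrow> hmin w z \<le> D (p i) z - w i"
  unfolding hmin_def by (rule Min_le) auto

lemma hmin_ex: "\<exists>i<n. hmin w z = D (p i) z - w i"
proof -
  have "hmin w z \<in> (\<lambda>i. D (p i) z - w i) ` {..<n}"
    unfolding hmin_def using n_pos by (intro Min_in) auto
  thus ?thesis by auto
qed

lemma hmin_lip: assumes "\<forall>i<n. \<bar>w' i - w i\<bar> \<le> e" shows "\<bar>hmin w' z - hmin w z\<bar> \<le> e"
proof -
  obtain i where i: "i<n" "hmin w z = D (p i) z - w i" using hmin_ex by blast
  obtain k where k: "k<n" "hmin w' z = D (p k) z - w' k" using hmin_ex by blast
  have "hmin w' z \<le> D (p i) z - w' i" by (rule hmin_le[OF i(1)])
  moreover have "hmin w z \<le> D (p k) z - w k" by (rule hmin_le[OF k(1)])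
  ultimately show ?thesis using assms i k by (smt (verit))
qed

lemma hmin_cong: "\<forall>i<n. w' i = w i + s \<Longrightarrow> hmin w' z = hmin w z - s"
proof -
  assume a: "\<forall>i<n. w' i = w i + s"
  obtain i where i: "i<n" "hmin w z = D (p i) z - w i" using hmin_ex by blast
  obtain k where k: "k<n" "hmin w' z = D (p k) z - w' k" using hmin_ex by blast
  have "hmin w' z \<le> D (p i) z - w' i" by (rule hmin_le[OF i(1)])
  moreover have "hmin w z \<le> D (p k) z - w k" by (rule hmin_le[OF k(1)])
  ultimately show ?thesis using a i k by (smt (verit))
qed

end

lemma cont_Min: fixes f :: "'i \<Rightarrow> 'b::topological_space \<Rightarrow> real" shows "finite I \<Longrightarrow> I \<noteq> {} \<Longrightarrow> (\<And>i. i\<in>I \<Longrightarrow> continuous_on S (f i)) \<Longrightarrow>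
   continuous_on S (\<lambda>z. Min ((\<lambda>i. f i z) ` I))"
proof (induction I rule: finite_ne_induct)
  case (singleton x) then show ?case by simp
next
  case (insert x F)
  have "continuous_on S (\<lambda>z. min (f x z) (Min ((\<lambda>i. f i z) ` F)))"
    by (intro continuous_on_min) (use insert in auto)
  thus ?case using insert by (simp add: Min_insert)
qed

context vs begin

lemma hmin_cont: "continuous_on UNIV (hmin w)"
  unfolding hmin_def using n_pos
  by (intro cont_Min continuous_intros cont_f) auto

lemma hmin_meas: "hmin w \<in> borel_measurable M" by (rule meas_cont[OF hmin_cont])

lemma bound_D: "\<exists>B. \<forall>i<n. \<forall>z\<in>C. \<bar>D (p i) z\<bar> \<le> B"
proof -
  have "bounded (\<Union>i\<in>{..<n}. D (p i) ` closure C)"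
  proof (rule bounded_Union)
    show "\<forall>S\<in>(\<lambda>i. D (p i) ` closure C) ` {..<n}. bounded S"
      using bC by (auto intro!: compact_imp_bounded compact_continuous_image
          continuous_on_subset[OF cont_f] simp: compact_closure)
  qed auto
  then obtain B where "\<forall>x\<in>(\<Union>i\<in>{..<n}. D (p i) ` closure C). \<bar>x\<bar> \<le> B" by (auto simp: bounded_real)
  thus ?thesis using closure_subset by fastforce
qed

lemma VR_iff: "i < n \<Longrightarrow> z \<in> VR D p n w i \<longleftrightarrow> (\<forall>j<n. j \<noteq> i \<longrightarrow> D (p i) z - w i < D (p j) z - w j)"
  unfolding VR_def Rgam_def by (auto simp: algebra_simps)

lemma VR_open: "i < n \<Longrightarrow> open (VR D p n w i)"
  unfolding VR_def by (intro open_INT) (auto intro: Rgam_open)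

lemma VR_meas: "i < n \<Longrightarrow> C \<inter> VR D p n w i \<in> sets M"
  by (intro sets.Int C_meas open_meas VR_open)

lemma VR_disj: "i < n \<Longrightarrow> j < n \<Longrightarrow> i \<noteq> j \<Longrightarrow> VR D p n w i \<inter> VR D p n w j = {}"
  using VR_iff by fastforce

end

locale vsl = vs +
  fixes lam :: "nat \<Rightarrow> real"
  assumes lampos: "\<forall>i<n. lam i > 0" and massC: "measure M C = (\<Sum>i<n. lam i)"
begin

lemma space_M: "space M = UNIV"
  using sets_eq_imp_space_eq[OF sets_M] by simp

definition F :: "(nat \<Rightarrow> real) \<Rightarrow> real" where
  "F w = (\<integral>z. indicator C z * hmin w z \<partial>M) + (\<Sum>i<n. lam i * w i)"

lemma int_ind: "integrable M (indicator C :: 'a \<Rightarrow> real)"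
  using C_meas finC by (rule integrable_real_indicator)

lemma int_indc: "integrable M (\<lambda>z. c * indicator C z :: real)"
  using int_ind by simp

lemma int_indicator: "(\<integral>z. indicator A z \<partial>M) = measure M A"
  by (simp add: space_M)

lemma int_h: "integrable M (\<lambda>z. indicator C z * hmin w z)"
proof -
  obtain B where B: "\<forall>i<n. \<forall>z\<in>C. \<bar>D (p i) z\<bar> \<le> B" using bound_D by blast
  have "AE x\<in>C in M. norm (hmin w x) \<le> B + (\<Sum>i<n. \<bar>w i\<bar>)"
  proof (rule AE_I2, rule impI)
    fix x assume x: "x \<in> C"
    obtain i where i: "i<n" "hmin w x = D (p i) x - w i" using hmin_ex by blast
    have "\<bar>w i\<bar> \<le> (\<Sum>i<n. \<bar>w i\<bar>)" by (rule member_le_sum) (use i in auto)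
    thus "norm (hmin w x) \<le> B + (\<Sum>i<n. \<bar>w i\<bar>)" using B i x by fastforce
  qed
  from integrableI_bounded_set_indicator[OF C_meas hmin_meas finC this]
  show ?thesis by simp
qed

lemma F_lip: assumes a: "\<forall>i<n. \<bar>w' i - w i\<bar> \<le> e"
  shows "\<bar>F w' - F w\<bar> \<le> e * (measure M C + (\<Sum>i<n. lam i))"
proof -
  have e0: "e \<ge> 0" using a n_pos by (meson abs_ge_zero order_trans)
  define g where "g z = indicator C z * hmin w' z - indicator C z * hmin w z" for z
  have ig: "integrable M g" unfolding g_def by (intro Bochner_Integration.integrable_diff int_h)
  have d1: "(\<integral>z. indicator C z * hmin w' z \<partial>M) - (\<integral>z. indicator C z * hmin w z \<partial>M) = integral\<^sup>L M g"
    unfolding g_def by (rule Bochner_Integration.integral_diff[symmetric]) (intro int_h)+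
  have "\<bar>integral\<^sup>L M g\<bar> \<le> (\<integral>z. \<bar>g z\<bar> \<partial>M)"
    using integral_norm_bound[of M g] by simp
  also have "\<dots> \<le> (\<integral>z. e * indicator C z \<partial>M)"
  proof (rule integral_mono[OF integrable_abs[OF ig] int_indc])
    fix z
    have "\<bar>hmin w' z - hmin w z\<bar> \<le> e" by (rule hmin_lip[OF a])
    thus "\<bar>g z\<bar> \<le> e * indicator C z" unfolding g_def by (auto simp: indicator_def)
  qed
  also have "\<dots> = e * measure M C" by (simp add: space_M)
  finally have I: "\<bar>integral\<^sup>L M g\<bar> \<le> e * measure M C" .
  have "\<bar>(\<Sum>i<n. lam i * w' i) - (\<Sum>i<n. lam i * w i)\<bar> = \<bar>\<Sum>i<n. lam i * (w' i - w i)\<bar>"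
    by (simp add: sum_subtractf right_diff_distrib)
  also have "\<dots> \<le> (\<Sum>i<n. \<bar>lam i * (w' i - w i)\<bar>)" by (rule sum_abs)
  also have "\<dots> \<le> (\<Sum>i<n. lam i * e)"
  proof (rule sum_mono)
    fix i assume "i \<in> {..<n}"
    thus "\<bar>lam i * (w' i - w i)\<bar> \<le> lam i * e" using a lampos
      by (auto simp: abs_mult intro!: mult_left_mono)
  qed
  finally have S: "\<bar>(\<Sum>i<n. lam i * w' i) - (\<Sum>i<n. lam i * w i)\<bar> \<le> e * (\<Sum>i<n. lam i)"
    by (simp add: sum_distrib_left mult.commute)
  have "F w' - F w = integral\<^sup>L M g + ((\<Sum>i<n. lam i * w' i) - (\<Sum>i<n. lam i * w i))"
    unfolding F_def using d1 by simp
  thus ?thesis using I S by (simp add: distrib_left)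
qed

lemma F_cont: "continuous_on UNIV F"
proof (rule continuous_at_imp_continuous_on, intro ballI)
  fix w :: "nat \<Rightarrow> real"
  define K0 where "K0 = measure M C + (\<Sum>i<n. lam i) + 1"
  have "0 \<le> (\<Sum>i<n. lam i)" by (rule sum_nonneg) (use lampos in \<open>auto intro: less_imp_le\<close>)
  hence K0: "K0 \<ge> 1" unfolding K0_def using measure_nonneg[of M C] by linarith
  show "isCont F w" unfolding continuous_at
  proof (rule tendstoI)
    fix \<epsilon> :: real assume e: "\<epsilon> > 0"
    define \<delta> where "\<delta> = \<epsilon> / (2 * K0)"
    have d: "\<delta> > 0" unfolding \<delta>_def using e K0 by auto
    define V where "V = {x. \<forall>i\<in>{..<n}. x ((\<lambda>i. i) i) \<in> ball (w i) \<delta>}"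
    have oV: "open V" unfolding V_def by (rule product_topology_basis') auto
    have wV: "w \<in> V" unfolding V_def using d by auto
    have "dist (F x) (F w) < \<epsilon>" if "x \<in> V" for x
    proof -
      have "\<forall>i<n. \<bar>x i - w i\<bar> \<le> \<delta>" using that unfolding V_def by (force simp: dist_real_def abs_minus_commute)
      hence "\<bar>F x - F w\<bar> \<le> \<delta> * (K0 - 1)" using F_lip unfolding K0_def by simp
      also have "\<dots> < \<epsilon>" unfolding \<delta>_def using e K0 by (simp add: field_simps) (smt (verit) mult_pos_pos)
      finally show ?thesis by (simp add: dist_real_def)
    qed
    hence "eventually (\<lambda>x. dist (F x) (F w) < \<epsilon>) (nhds w)"
      unfolding eventually_nhds using oV wV by blast
    thus "eventually (\<lambda>x. dist (F x) (F w) < \<epsilon>) (at w)"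
      unfolding eventually_at_filter by (rule eventually_mono) simp
  qed
qed


lemma hmin_step1: assumes "i<n" "t\<ge>0" shows "hmin (w(i := w i + t)) z \<ge> hmin w z - t"
proof -
  have "\<forall>j<n. \<bar>(w(i := w i + t)) j - w j\<bar> \<le> t" using assms by auto
  from hmin_lip[OF this, of z] show ?thesis by linarith
qed

lemma hmin_step2: assumes "i<n" "t\<ge>0" "z \<notin> VR D p n (w(i := w i + t)) i"
  shows "hmin (w(i := w i + t)) z \<ge> hmin w z"
proof -
  define w' where "w' = w(i := w i + t)"
  obtain k where k: "k<n" "hmin w' z = D (p k) z - w' k" using hmin_ex by blast
  show ?thesis
  proof (cases "k = i")
    case False
    thus ?thesis using k hmin_le[OF k(1), of w z] unfolding w'_def by simp
  next
    case True
    then obtain j where j: "j<n" "j\<noteq>i" "\<not> D (p i) z - w' i < D (p j) z - w' j"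
      using assms(3) VR_iff[OF assms(1)] unfolding w'_def by blast
    have "hmin w' z \<le> D (p j) z - w' j" by (rule hmin_le[OF j(1)])
    hence "hmin w' z = D (p j) z - w j" using j True k unfolding w'_def by auto
    thus ?thesis using hmin_le[OF j(1), of w z] unfolding w'_def by simp
  qed
qed

lemma F_step: assumes "i<n" "t>0"
  shows "F (w(i := w i + t)) - F w \<ge> t * lam i - t * measure M (C \<inter> VR D p n (w(i := w i + t)) i)"
proof -
  define w' where "w' = w(i := w i + t)"
  define A where "A = C \<inter> VR D p n w' i"
  have Am: "A \<in> sets M" unfolding A_def by (rule VR_meas[OF assms(1)])
  have Af: "emeasure M A < \<infinity>" using fin_sub[of A] unfolding A_def by simp
  define g where "g z = indicator C z * hmin w' z - indicator C z * hmin w z" for z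
  have ig: "integrable M g" unfolding g_def by (intro Bochner_Integration.integrable_diff int_h)
  have d1: "(\<integral>z. indicator C z * hmin w' z \<partial>M) - (\<integral>z. indicator C z * hmin w z \<partial>M) = integral\<^sup>L M g"
    unfolding g_def by (rule Bochner_Integration.integral_diff[symmetric]) (intro int_h)+
  have "(\<integral>z. (-t) * indicator A z \<partial>M) \<le> integral\<^sup>L M g"
  proof (rule integral_mono[OF _ ig])
    show "integrable M (\<lambda>z. (-t) * indicator A z :: real)"
      using integrable_real_indicator[OF Am Af] by simp
    fix z
    show "(-t) * indicator A z \<le> g z"
    proof (cases "z \<in> C")
      case False thus ?thesis unfolding g_def A_def by simp
    next
      case True
      show ?thesis
      proof (cases "z \<in> A")
        case True
        thus ?thesis using hmin_step1[OF assms(1) less_imp_le[OF assms(2)], of w z] \<open>z\<in>C\<close>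
          unfolding g_def A_def w'_def by simp
      next
        case False
        hence "z \<notin> VR D p n w' i" using \<open>z\<in>C\<close> unfolding A_def by simp
        thus ?thesis using hmin_step2[OF assms(1) less_imp_le[OF assms(2)], of z w] \<open>z\<in>C\<close> False
          unfolding g_def A_def w'_def by simp
      qed
    qed
  qed
  also have "(\<integral>z. (-t) * indicator A z \<partial>M) = - t * measure M A" by (simp add: space_M)
  finally have I: "- t * measure M A \<le> integral\<^sup>L M g" .
  have "(\<Sum>j<n. lam j * w' j) = (\<Sum>j<n. lam j * w j + (if j = i then lam i * t else 0))"
    by (rule sum.cong) (auto simp: w'_def distrib_left)
  also have "\<dots> = (\<Sum>j<n. lam j * w j) + lam i * t" using assms(1) by (simp add: sum.distrib)
  finally have S: "(\<Sum>j<n. lam j * w' j) - (\<Sum>j<n. lam j * w j) = lam i * t" by simp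
  have "F w' - F w = integral\<^sup>L M g + lam i * t" unfolding F_def using d1 S by simp
  thus ?thesis using I unfolding A_def w'_def by (simp add: mult.commute)
qed

lemma Rm: "i<n \<Longrightarrow> j<n \<Longrightarrow> C \<inter> Rgam D (p i) (p j) g \<in> sets M"
  by (intro sets.Int C_meas open_meas Rgam_open)

lemma G_lim: assumes "i<n" "j<n" "i\<noteq>j"
  shows "((\<lambda>t. measure M (C \<inter> Rgam D (p i) (p j) (g + t))) \<longlongrightarrow> measure M (C \<inter> Rgam D (p i) (p j) g)) (at_right 0)"
proof -
  define E where "E = (\<lambda>\<gamma>. emeasure M (C \<inter> Rgam D (p i) (p j) \<gamma>))"
  have cE: "continuous_on UNIV E" using adm_pair[OF assms] unfolding E_def by blast
  have iE: "isCont E g" using cE by (simp add: continuous_on_eq_continuous_at)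
  have "((\<lambda>e::real. e) \<longlongrightarrow> 0) (at_right 0)" by (rule tendsto_ident_at)
  hence "((\<lambda>e::real. g + e) \<longlongrightarrow> g + 0) (at_right 0)" by (intro tendsto_add tendsto_const)
  hence lim: "((\<lambda>e. E (g + e)) \<longlongrightarrow> E g) (at_right 0)"
    using isCont_tendsto_compose[OF iE] by simp
  hence "((\<lambda>e. E (g + e)) \<longlongrightarrow> ennreal (measure M (C \<inter> Rgam D (p i) (p j) g))) (at_right 0)"
    unfolding E_def using fin_sub by simp
  from tendsto_enn2real[OF this] show ?thesis unfolding E_def by (simp add: measure_def)
qed

lemma lam_le: assumes i: "i<n" and t0: "t0>0"
  and h: "\<forall>t. 0<t \<and> t \<le> t0 \<longrightarrow> lam i \<le> measure M (C \<inter> VR D p n (w(i := w i + t)) i)"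
  shows "lam i \<le> measure M (C \<inter> VR D p n w i)"
proof -
  define J where "J = {..<n} - {i}"
  have fJ: "finite J" unfolding J_def by simp
  define G where "G j \<gamma> = measure M (C \<inter> Rgam D (p i) (p j) \<gamma>)" for j \<gamma>
  define R where "R t = measure M (C \<inter> VR D p n w i) + (\<Sum>j\<in>J. G j (w i - w j + t) - G j (w i - w j))" for t
  have bound: "lam i \<le> R t" if t: "0<t" "t \<le> t0" for t
  proof -
    define w' where "w' = w(i := w i + t)"
    define U where "U = (\<Union>j\<in>J. (C \<inter> Rgam D (p i) (p j) (w i - w j + t)) - (C \<inter> Rgam D (p i) (p j) (w i - w j)))"
    have Jm: "\<And>j. j\<in>J \<Longrightarrow> (C \<inter> Rgam D (p i) (p j) (w i - w j + t)) - (C \<inter> Rgam D (p i) (p j) (w i - w j)) \<in> sets M"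
      using i unfolding J_def by (intro sets.Diff Rm) auto
    have Um: "U \<in> sets M" unfolding U_def using fJ Jm by blast
    have sub: "C \<inter> VR D p n w' i \<subseteq> (C \<inter> VR D p n w i) \<union> U"
    proof
      fix z assume z: "z \<in> C \<inter> VR D p n w' i"
      show "z \<in> (C \<inter> VR D p n w i) \<union> U"
      proof (cases "z \<in> VR D p n w i")
        case True thus ?thesis using z by simp
      next
        case False
        then obtain j where j: "j<n" "j\<noteq>i" "\<not> D (p i) z - w i < D (p j) z - w j"
          using VR_iff[OF i] by blast
        have "D (p i) z - w' i < D (p j) z - w' j" using z j VR_iff[OF i, of z w'] by auto
        hence "z \<in> (C \<inter> Rgam D (p i) (p j) (w i - w j + t)) - (C \<inter> Rgam D (p i) (p j) (w i - w j))"
          using z j unfolding Rgam_def w'_def by auto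
        thus ?thesis unfolding U_def J_def using j by blast
      qed
    qed
    have "lam i \<le> measure M (C \<inter> VR D p n w' i)" using h t unfolding w'_def by blast
    also have "\<dots> \<le> measure M ((C \<inter> VR D p n w i) \<union> U)"
      by (rule measure_mono_fmeasurable[OF sub VR_meas[OF i]]) 
         (rule fmeas_sub, use Um VR_meas[OF i] U_def in auto)
    also have "\<dots> \<le> measure M (C \<inter> VR D p n w i) + measure M U"
      by (rule measure_Un_le[OF VR_meas[OF i] Um])
    also have "measure M U \<le> (\<Sum>j\<in>J. measure M ((C \<inter> Rgam D (p i) (p j) (w i - w j + t)) - (C \<inter> Rgam D (p i) (p j) (w i - w j))))"
      unfolding U_def by (rule measure_UNION_le[OF fJ Jm])
    also have "\<dots> = (\<Sum>j\<in>J. G j (w i - w j + t) - G j (w i - w j))"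
    proof (rule sum.cong[OF refl])
      fix j assume j: "j \<in> J"
      have jn: "j < n" using j unfolding J_def by auto
      show "measure M ((C \<inter> Rgam D (p i) (p j) (w i - w j + t)) - (C \<inter> Rgam D (p i) (p j) (w i - w j))) =
            G j (w i - w j + t) - G j (w i - w j)"
        unfolding G_def
        by (rule measure_Diff) (use fin_sub[of "C \<inter> Rgam D (p i) (p j) (w i - w j + t)"] Rm[OF i jn] t
              in \<open>auto simp: Rgam_def\<close>)
    qed
    finally show ?thesis unfolding R_def by simp
  qed
  have "(R \<longlongrightarrow> measure M (C \<inter> VR D p n w i) + (\<Sum>j\<in>J. G j (w i - w j) - G j (w i - w j))) (at_right 0)"
    unfolding R_def
  proof (intro tendsto_intros)
    fix j assume "j \<in> J"
    hence jn: "j<n" "i\<noteq>j" unfolding J_def by auto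
    show "((\<lambda>t. G j (w i - w j + t)) \<longlongrightarrow> G j (w i - w j)) (at_right 0)"
      unfolding G_def by (rule G_lim[OF i jn])
  qed
  hence lim: "(R \<longlongrightarrow> measure M (C \<inter> VR D p n w i)) (at_right 0)" by simp
  show ?thesis
  proof (rule tendsto_lowerbound[OF lim])
    have "eventually (\<lambda>t. 0 < t \<and> t \<le> t0) (at_right (0::real))"
      unfolding eventually_at_right[OF t0] using t0 by auto
    thus "\<forall>\<^sub>F t in at_right 0. lam i \<le> R t" by (rule eventually_mono) (use bound in auto)
  qed simp
qed


lemma VR_disj_fam: "disjoint_family_on (\<lambda>i. C \<inter> VR D p n w i) {..<n}"
  unfolding disjoint_family_on_def using VR_disj by blast

lemma sum_VR_le: "(\<Sum>i<n. measure M (C \<inter> VR D p n w i)) \<le> measure M C"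
proof -
  have "(\<Sum>i<n. emeasure M (C \<inter> VR D p n w i)) = emeasure M (\<Union>i<n. C \<inter> VR D p n w i)"
    by (rule sum_emeasure) (use VR_meas VR_disj_fam in auto)
  also have "\<dots> \<le> emeasure M C" by (rule emeasure_mono[OF _ C_meas]) auto
  finally have "(\<Sum>i<n. ennreal (measure M (C \<inter> VR D p n w i))) \<le> ennreal (measure M C)"
    using fin_sub by simp
  hence "ennreal (\<Sum>i<n. measure M (C \<inter> VR D p n w i)) \<le> ennreal (measure M C)"
    by (simp add: sum_ennreal)
  thus ?thesis by (simp add: ennreal_le_iff)
qed

lemma existence: "\<exists>w. \<forall>i<n. emeasure M (C \<inter> VR D p n w i) = ennreal (lam i)"
proof -
  obtain B where B: "\<forall>i<n. \<forall>z\<in>C. \<bar>D (p i) z\<bar> \<le> B" using bound_D by blast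
  define R where "R = 2 * \<bar>B\<bar> + 1"
  have R0: "R > 0" unfolding R_def by simp
  define K where "K = PiE UNIV (\<lambda>i::nat. if i<n then {0..R} else {0::real})"
  have "compactin (product_topology (\<lambda>i. euclidean) UNIV) K"
    unfolding K_def by (subst compactin_PiE) (auto simp: compactin_euclidean_iff)
  hence cK: "compact K" by (simp add: euclidean_product_topology compactin_euclidean_iff)
  have Kiff: "x \<in> K \<longleftrightarrow> (\<forall>j<n. 0 \<le> x j \<and> x j \<le> R) \<and> (\<forall>j. \<not> j<n \<longrightarrow> x j = 0)" for x
    unfolding K_def by (auto simp: PiE_iff)
  have K0: "(\<lambda>i. 0) \<in> K" unfolding Kiff using R0 by auto
  have "compact (F ` K)" by (rule compact_continuous_image[OF continuous_on_subset[OF F_cont] cK]) auto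
  then obtain y where y: "y \<in> F ` K" "\<forall>t\<in>F ` K. t \<le> y" using compact_attains_sup K0 by blast
  then obtain w0 where w0: "w0 \<in> K" "\<forall>x\<in>K. F x \<le> F w0" by auto
  define s where "s = Min (w0 ` {..<n})"
  have "s \<in> w0 ` {..<n}" unfolding s_def using n_pos by (intro Min_in) auto
  then obtain k where k: "k<n" "s = w0 k" by auto
  have w0R: "\<And>i. i<n \<Longrightarrow> 0 \<le> w0 i \<and> w0 i \<le> R" using w0(1) unfolding Kiff by auto
  define w where "w = (\<lambda>i. if i<n then w0 i - s else 0)"
  have sle: "\<And>i. i<n \<Longrightarrow> s \<le> w0 i" unfolding s_def by (rule Min_le) auto
  have wK: "w \<in> K" unfolding Kiff w_def using sle w0R k by (auto) (smt (verit))
  have hw: "hmin w z = hmin w0 z + s" for z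
    using hmin_cong[of w w0 "-s" z] unfolding w_def by simp
  have "F w = F w0"
  proof -
    have "(\<integral>z. indicator C z * hmin w z \<partial>M) = (\<integral>z. indicator C z * hmin w0 z + s * indicator C z \<partial>M)"
      by (simp add: hw distrib_left mult.commute)
    also have "\<dots> = (\<integral>z. indicator C z * hmin w0 z \<partial>M) + s * measure M C"
      by (subst Bochner_Integration.integral_add[OF int_h int_indc]) (simp add: space_M)
    finally have I: "(\<integral>z. indicator C z * hmin w z \<partial>M) = (\<integral>z. indicator C z * hmin w0 z \<partial>M) + s * measure M C" .
    have "(\<Sum>i<n. lam i * w i) = (\<Sum>i<n. lam i * w0 i - s * lam i)"
      by (rule sum.cong) (auto simp: w_def right_diff_distrib)
    also have "\<dots> = (\<Sum>i<n. lam i * w0 i) - s * measure M C"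
      by (simp add: sum_subtractf sum_distrib_left massC)
    finally show ?thesis unfolding F_def using I by simp
  qed
  hence wmax: "\<forall>x\<in>K. F x \<le> F w" using w0 by simp
  have opt: "lam i \<le> measure M (C \<inter> VR D p n w i)" if i: "i<n" "w i < R" for i
  proof (rule lam_le[OF i(1), of "R - w i"])
    show "0 < R - w i" using i by simp
    show "\<forall>t. 0 < t \<and> t \<le> R - w i \<longrightarrow> lam i \<le> measure M (C \<inter> VR D p n (w(i := w i + t)) i)"
    proof (intro allI impI)
      fix t assume t: "0 < t \<and> t \<le> R - w i"
      have "w(i := w i + t) \<in> K" using wK t i unfolding Kiff by auto
      hence "F (w(i := w i + t)) \<le> F w" using wmax by blast
      hence "t * lam i - t * measure M (C \<inter> VR D p n (w(i := w i + t)) i) \<le> 0"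
        using F_step[OF i(1), of t w] t by linarith
      hence "t * lam i \<le> t * measure M (C \<inter> VR D p n (w(i := w i + t)) i)" by simp
      thus "lam i \<le> measure M (C \<inter> VR D p n (w(i := w i + t)) i)" using t by simp
    qed
  qed
  have wk: "w k = 0" using k unfolding w_def by simp
  have allR: "w i < R" if i: "i<n" for i
  proof (rule ccontr)
    assume "\<not> w i < R"
    hence wi: "w i \<ge> R" by simp
    have ik: "i \<noteq> k" using wi wk R0 by auto
    have "C \<inter> VR D p n w k = {}"
    proof (rule ccontr)
      assume "C \<inter> VR D p n w k \<noteq> {}"
      then obtain z where z: "z \<in> C" "z \<in> VR D p n w k" by blast
      hence "D (p k) z - w k < D (p i) z - w i" using VR_iff[OF k(1)] i ik by blast
      moreover have "\<bar>D (p k) z\<bar> \<le> B" "\<bar>D (p i) z\<bar> \<le> B" using B z i k by auto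
      ultimately show False using wi wk unfolding R_def by linarith
    qed
    hence "lam k \<le> 0" using opt[OF k(1)] wk R0 by simp
    thus False using lampos k by force
  qed
  have le: "\<forall>i<n. lam i \<le> measure M (C \<inter> VR D p n w i)" using opt allR by blast
  have "(\<Sum>i<n. measure M (C \<inter> VR D p n w i) - lam i) \<le> 0"
    using sum_VR_le[of w] massC by (simp add: sum_subtractf)
  moreover have "(\<Sum>i<n. measure M (C \<inter> VR D p n w i) - lam i) \<ge> 0"
    by (rule sum_nonneg) (use le in auto)
  ultimately have "(\<Sum>i<n. measure M (C \<inter> VR D p n w i) - lam i) = 0" by simp
  hence "\<forall>i\<in>{..<n}. measure M (C \<inter> VR D p n w i) - lam i = 0"
    by (subst (asm) sum_nonneg_eq_0_iff) (use le in auto)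
  hence "\<forall>i<n. emeasure M (C \<inter> VR D p n w i) = ennreal (lam i)" using fin_sub by auto
  thus ?thesis by blast
qed


lemma nonempty_VR: assumes "i<n" "emeasure M (C \<inter> VR D p n w i) = ennreal (lam i)"
  shows "\<exists>z. z \<in> C \<and> z \<in> VR D p n w i"
proof (rule ccontr)
  assume "\<not> ?thesis"
  hence "C \<inter> VR D p n w i = {}" by auto
  thus False using assms lampos by auto
qed

lemma VR_shift: assumes "\<forall>i<n. w' i = w i + c" "i<n" shows "VR D p n w' i = VR D p n w i"
  unfolding VR_def Rgam_def using assms by auto

lemma uniq: assumes pc: "path_connected C"
  and hw: "\<forall>i<n. emeasure M (C \<inter> VR D p n w i) = ennreal (lam i)"
  and hw': "\<forall>i<n. emeasure M (C \<inter> VR D p n w' i) = ennreal (lam i)"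
  shows "\<exists>c. \<forall>i<n. w' i = w i + c"
proof -
  define c where "c i = w' i - w i" for i
  define cm where "cm = Max (c ` {..<n})"
  define I where "I = {i. i<n \<and> c i = cm}"
  define Jc where "Jc = {j. j<n \<and> c j < cm}"
  have cle: "\<And>i. i<n \<Longrightarrow> c i \<le> cm" unfolding cm_def by (rule Max_ge) auto
  have "cm \<in> c ` {..<n}" unfolding cm_def using n_pos by (intro Max_in) auto
  then obtain i1 where i1: "i1 \<in> I" unfolding I_def by auto
  show ?thesis
  proof (cases "Jc = {}")
    case True
    hence "\<forall>i<n. c i = cm" using cle unfolding Jc_def by force
    thus ?thesis unfolding c_def by (intro exI[of _ cm]) auto
  next
    case Jne: False
    have fI: "finite I" "finite Jc" unfolding I_def Jc_def by auto
    have IJ: "\<And>i. i<n \<Longrightarrow> i \<in> I \<or> i \<in> Jc" using cle unfolding I_def Jc_def by force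
    have IJd: "\<And>i. i \<in> I \<Longrightarrow> i \<notin> Jc" unfolding I_def Jc_def by auto
    have In: "\<And>i. i \<in> I \<Longrightarrow> i < n" and Jn: "\<And>i. i \<in> Jc \<Longrightarrow> i < n" unfolding I_def Jc_def by auto
    define cJ where "cJ = Max (c ` Jc)"
    have "cJ \<in> c ` Jc" unfolding cJ_def using fI Jne by (intro Max_in) auto
    hence cJlt: "cJ < cm" unfolding Jc_def by auto
    have cJge: "\<And>j. j \<in> Jc \<Longrightarrow> c j \<le> cJ" unfolding cJ_def using fI by (intro Max_ge) auto
    define \<delta> where "\<delta> = cm - cJ"
    have d0: "\<delta> > 0" unfolding \<delta>_def using cJlt by simp
    define a where "a i z = D (p i) z - w i" for i z
    define gI where "gI z = Min ((\<lambda>i. a i z) ` I)" for z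
    define gJ where "gJ z = Min ((\<lambda>i. a i z) ` Jc)" for z
    have Ine: "I \<noteq> {}" using i1 by auto
    have gI_le: "\<And>i z. i \<in> I \<Longrightarrow> gI z \<le> a i z" unfolding gI_def using fI by (intro Min_le) auto
    have gJ_le: "\<And>i z. i \<in> Jc \<Longrightarrow> gJ z \<le> a i z" unfolding gJ_def using fI by (intro Min_le) auto
    have gI_ex: "\<exists>i\<in>I. gI z = a i z" for z
    proof -
      have "gI z \<in> (\<lambda>i. a i z) ` I" unfolding gI_def using fI Ine by (intro Min_in) auto
      thus ?thesis by auto
    qed
    have gJ_ex: "\<exists>i\<in>Jc. gJ z = a i z" for z
    proof -
      have "gJ z \<in> (\<lambda>i. a i z) ` Jc" unfolding gJ_def using fI Jne by (intro Min_in) auto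
      thus ?thesis by auto
    qed
    define g where "g z = gI z - gJ z" for z
    have cg: "continuous_on UNIV g" unfolding g_def gI_def gJ_def a_def
      using fI Ine Jne In Jn by (intro continuous_intros cont_Min cont_f) auto
    obtain z1 where z1: "z1 \<in> C" "z1 \<in> VR D p n w i1" using nonempty_VR hw In[OF i1] by blast
    obtain j2 where j2: "j2 \<in> Jc" using Jne by auto
    obtain z2 where z2: "z2 \<in> C" "z2 \<in> VR D p n w j2" using nonempty_VR hw Jn[OF j2] by blast
    have "g z1 < 0"
    proof -
      obtain j where j: "j \<in> Jc" "gJ z1 = a j z1" using gJ_ex by blast
      have "j \<noteq> i1" using IJd[OF i1] j(1) by auto
      hence "a i1 z1 < a j z1" using z1(2) VR_iff[OF In[OF i1]] Jn[OF j(1)]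
        unfolding a_def by blast
      thus ?thesis using gI_le[OF i1, of z1] j unfolding g_def by simp
    qed
    have "g z2 > 0"
    proof -
      obtain i where i: "i \<in> I" "gI z2 = a i z2" using gI_ex by blast
      have "i \<noteq> j2" using IJd[OF i(1)] j2 by auto
      hence "a j2 z2 < a i z2" using z2(2) VR_iff[OF Jn[OF j2]] In[OF i(1)]
        unfolding a_def by blast
      thus ?thesis using gJ_le[OF j2, of z2] i unfolding g_def by simp
    qed
    define \<epsilon> where "\<epsilon> = min \<delta> (g z2) / 2"
    have conn: "connected (g ` C)"
      by (rule connected_continuous_image[OF continuous_on_subset[OF cg] path_connected_imp_connected[OF pc]]) auto
    have e0: "\<epsilon> > 0" unfolding \<epsilon>_def using d0 \<open>g z2 > 0\<close> by simp
    have e1: "\<epsilon> \<le> g z2" "\<epsilon> < \<delta>" unfolding \<epsilon>_def using d0 \<open>g z2 > 0\<close> by linarith+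
    have "\<epsilon> \<in> g ` C"
      by (rule connectedD_interval[OF conn imageI[OF z1(1)] imageI[OF z2(1)]])
         (use e0 e1 \<open>g z1 < 0\<close> in linarith)+
    then obtain z0 where z0: "z0 \<in> C" "g z0 = \<epsilon>" by auto
    define U where "U = C \<inter> {z. 0 < g z} \<inter> {z. g z < \<delta>}"
    have oU: "open U" unfolding U_def
      by (intro open_Int oC open_Collect_less cg continuous_on_const)
    have "z0 \<in> U" unfolding U_def using z0 e0 e1 by auto
    hence Upos: "emeasure M U > 0" using pos_open[OF oU] by blast
    define T where "T = (\<Union>i<n. \<Union>j\<in>{..<n}-{i}. C \<inter> {z. D (p i) z - D (p j) z = w' i - w' j})"
    have Tnull: "T \<in> null_sets M" unfolding T_def
    proof (intro null_sets.finite_UN)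
      fix i j assume "i \<in> {..<n}" "j \<in> {..<n} - {i}"
      hence ij: "i<n" "j<n" "i\<noteq>j" by auto
      show "C \<inter> {z. D (p i) z - D (p j) z = w' i - w' j} \<in> null_sets M"
        by (rule null_setsI[OF tie_null[OF ij]])
           (intro sets.Int C_meas closed_meas closed_Collect_eq continuous_intros cont_f ij)
    qed auto
    define A where "A = (\<Union>i\<in>I. C \<inter> VR D p n w i)"
    define A' where "A' = (\<Union>i\<in>I. C \<inter> VR D p n w' i)"
    have Am: "A \<in> sets M" "A' \<in> sets M" unfolding A_def A'_def using fI VR_meas In by blast+
    have dI: "disjoint_family_on (\<lambda>i. C \<inter> VR D p n v i) I" for v
      by (rule disjoint_family_on_mono[OF _ VR_disj_fam]) (use In in auto)
    have eA: "emeasure M A = (\<Sum>i\<in>I. ennreal (lam i))" unfolding A_def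
      by (subst sum_emeasure[symmetric]) (use fI VR_meas In hw dI in auto)
    have eA': "emeasure M A' = (\<Sum>i\<in>I. ennreal (lam i))" unfolding A'_def
      by (subst sum_emeasure[symmetric]) (use fI VR_meas In hw' dI in auto)
    have AA': "A \<subseteq> A'"
    proof
      fix z assume "z \<in> A"
      then obtain i where i: "i \<in> I" "z \<in> C" "z \<in> VR D p n w i" unfolding A_def by auto
      have "z \<in> VR D p n w' i" unfolding VR_iff[OF In[OF i(1)]]
      proof (intro allI impI)
        fix j assume j: "j<n" "j\<noteq>i"
        have "D (p i) z - w i < D (p j) z - w j" using i(3) VR_iff[OF In[OF i(1)]] j by blast
        moreover have "c i = cm" "c j \<le> cm" using i(1) cle j unfolding I_def by auto
        ultimately show "D (p i) z - w' i < D (p j) z - w' j" unfolding c_def by linarith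
      qed
      thus "z \<in> A'" unfolding A'_def using i by auto
    qed
    have UT: "U - T \<subseteq> A' - A"
    proof
      fix z assume z: "z \<in> U - T"
      have zC: "z \<in> C" and g1: "0 < g z" and g2: "g z < \<delta>" using z unfolding U_def by auto
      have "z \<notin> A"
      proof
        assume "z \<in> A"
        then obtain i where i: "i \<in> I" "z \<in> VR D p n w i" unfolding A_def by auto
        obtain j where j: "j \<in> Jc" "gJ z = a j z" using gJ_ex by blast
        have "j \<noteq> i" using IJd[OF i(1)] j(1) by auto
        hence "a i z < a j z" using i(2) VR_iff[OF In[OF i(1)]] Jn[OF j(1)]
          unfolding a_def by blast
        thus False using gI_le[OF i(1), of z] j g1 unfolding g_def by simp
      qed
      moreover have "z \<in> A'"
      proof -
        obtain i where i: "i \<in> I" "gI z = a i z" using gI_ex by blast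
        have "z \<in> VR D p n w' i" unfolding VR_iff[OF In[OF i(1)]]
        proof (intro allI impI)
          fix j assume j: "j<n" "j\<noteq>i"
          have ci: "c i = cm" using i(1) unfolding I_def by auto
          show "D (p i) z - w' i < D (p j) z - w' j"
          proof (cases "j \<in> I")
            case True
            hence "c j = cm" unfolding I_def by auto
            moreover have "gI z \<le> a j z" by (rule gI_le[OF True])
            moreover have "D (p i) z - D (p j) z \<noteq> w' i - w' j"
            proof
              assume eq: "D (p i) z - D (p j) z = w' i - w' j"
              have "z \<in> T" unfolding T_def
              proof (rule UN_I[of i])
                show "i \<in> {..<n}" using In[OF i(1)] by simp
                show "z \<in> (\<Union>j\<in>{..<n}-{i}. C \<inter> {z. D (p i) z - D (p j) z = w' i - w' j})"
                  by (rule UN_I[of j]) (use j zC eq in auto)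
              qed
              thus False using z by blast
            qed
            ultimately have "D (p i) z - w' i \<le> D (p j) z - w' j" "D (p i) z - w' i \<noteq> D (p j) z - w' j"
              using ci i(2) unfolding a_def c_def by linarith+
            thus ?thesis by linarith
          next
            case False
            hence jJ: "j \<in> Jc" using IJ j by blast
            have "c j \<le> cJ" by (rule cJge[OF jJ])
            moreover have "gJ z \<le> a j z" by (rule gJ_le[OF jJ])
            ultimately show ?thesis using ci i(2) g2 unfolding a_def c_def g_def \<delta>_def by linarith
          qed
        qed
        thus ?thesis unfolding A'_def using i zC by auto
      qed
      ultimately show "z \<in> A' - A" by simp
    qed
    have Um: "U \<in> sets M" by (rule open_meas[OF oU])
    have "emeasure M A + emeasure M (U - T) = emeasure M (A \<union> (U - T))"
      by (rule plus_emeasure) (use Am Um Tnull UT in auto)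
    also have "\<dots> \<le> emeasure M A'" by (rule emeasure_mono[OF _ Am(2)]) (use AA' UT in auto)
    finally have "emeasure M A + emeasure M U \<le> emeasure M A"
      using eA eA' emeasure_Diff_null_set[OF Tnull Um] by simp
    moreover have "emeasure M A < \<infinity>"
      by (rule le_less_trans[OF emeasure_mono[OF _ C_meas] finC]) (auto simp: A_def)
    ultimately have "emeasure M A + emeasure M U \<le> emeasure M A + 0" by simp
    hence "emeasure M U \<le> 0" using \<open>emeasure M A < \<infinity>\<close>
      by (metis ennreal_add_left_cancel_le less_imp_neq)
    thus ?thesis using Upos by simp
  qed
qed

end

theorem theorem1:
  fixes M :: "'a::euclidean_space measure"
    and D :: "'a \<Rightarrow> 'a \<Rightarrow> real"
    and p :: "nat \<Rightarrow> 'a"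
    and n :: nat
    and C :: "'a set"
    and lam :: "nat \<Rightarrow> real"
  assumes "mutually_ac_lebesgue M"
    and "n \<ge> 2"
    and "inj_on p {..<n}"
    and "admissible M D (p ` {..<n})"
    and "bounded C" and "open C"
    and "\<forall>i<n. lam i > 0"
    and "emeasure M C = ennreal (\<Sum>i<n. lam i)"
  shows "(\<exists>w :: nat \<Rightarrow> real. \<forall>i<n. emeasure M (C \<inter> VR D p n w i) = ennreal (lam i))
       \<and> (path_connected C \<longrightarrow>
           (\<forall>w w'. (\<forall>i<n. emeasure M (C \<inter> VR D p n w i) = ennreal (lam i)) \<and>
                   (\<forall>i<n. emeasure M (C \<inter> VR D p n w' i) = ennreal (lam i)) \<longrightarrow>
                   (\<exists>c::real. \<forall>i<n. w' i = w i + c) \<and>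
                   (\<forall>i<n. C \<inter> VR D p n w' i = C \<inter> VR D p n w i)))"
proof -
  have finC: "emeasure M C < \<infinity>" using assms(8) by simp
  have s0: "0 \<le> (\<Sum>i<n. lam i)" by (rule sum_nonneg) (use assms(7) in \<open>auto intro: less_imp_le\<close>)
  have mC: "measure M C = (\<Sum>i<n. lam i)" using assms(8) s0 by (simp add: measure_def)
  interpret vsl M D p n C lam
    by unfold_locales (use assms finC mC in auto)
  show ?thesis
  proof (intro conjI impI allI)
    show "\<exists>w. \<forall>i<n. emeasure M (C \<inter> VR D p n w i) = ennreal (lam i)" by (rule existence)
  next
    fix w w' assume pc: "path_connected C"
      and h: "(\<forall>i<n. emeasure M (C \<inter> VR D p n w i) = ennreal (lam i)) \<and>
              (\<forall>i<n. emeasure M (C \<inter> VR D p n w' i) = ennreal (lam i))"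
    from uniq[OF pc] h obtain c where c: "\<forall>i<n. w' i = w i + c" by blast
    show "\<exists>c. \<forall>i<n. w' i = w i + c" using c by blast
    show "C \<inter> VR D p n w' i = C \<inter> VR D p n w i" if "i<n" for i using VR_shift[OF c that] by simp
  qed
qed

end
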